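(* Let $r>0$ and let $z\colon[0,r)\to[0,r)$ be a homeomorphism with $(\alpha)z>\alpha$ for all $\alpha\in(0,r)$. Let $f$ be a permutation of $[0,r)$ such that $f$ commutes with $z$, $f$ is (right-)continuous at $0$, and $f$ has finitely many points of discontinuity. Then $f$ is continuous (for the usual topology).
   Context: Maps act on the right: $(\alpha)z$ is the image of $\alpha$ under $z$, and $fz$ means "first $f$, then $z$". *)

theory Defs
  imports "HOL-Analysis.Analysis"
begin

end

theory Submission
  imports Defs
begin

theorem lemma3p1:
  fixes r :: real and z f :: "real \<Rightarrow> real"
  assumes "r > 0"
    and "\<exists>z'. homeomorphism {0..<r} {0..<r} z z'"
    and "\<forall>\<alpha>\<in>{0<..<r}. z \<alpha> > \<alpha>"
    and "bij_betw f {0..<r} {0..<r}"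
    and "\<forall>x\<in>{0..<r}. f (z x) = z (f x)"
    and "continuous (at 0 within {0..<r}) f"
    and "finite {x \<in> {0..<r}. \<not> continuous (at x within {0..<r}) f}"
  shows "continuous_on {0..<r} f"
proof -
  define S where "S = {0..<r::real}"
  define D where "D = {x \<in> S. \<not> continuous (at x within S) f}"
  obtain z' where h: "homeomorphism S S z z'" using assms(2) S_def by blast
  have zS: "z ` S = S" and z'S: "z' ` S = S" and zz': "\<forall>x\<in>S. z' (z x) = x"
    and cz: "continuous_on S z" and cz': "continuous_on S z'"
    using h unfolding homeomorphism_def by auto
  have fS: "f ` S = S" using assms(4) S_def by (simp add: bij_betw_def)
  have key: "continuous (at x within S) f"
    if x: "x \<in> S" and c: "continuous (at (z x) within S) f" for x
  proof -
    have zx: "z x \<in> S" using x zS by blast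
    have c1: "continuous (at x within S) z"
      using cz x continuous_on_eq_continuous_within by blast
    have c2: "continuous (at x within S) (\<lambda>y. f (z y))"
      by (rule continuous_within_compose2[OF c1]) (simp add: zS c)
    have fzx: "f (z x) \<in> S" using zx fS by blast
    have c3: "continuous (at (f (z x)) within S) z'"
      using cz' fzx continuous_on_eq_continuous_within by blast
    have c4: "continuous (at x within S) (\<lambda>y. z' (f (z y)))"
      apply (rule continuous_within_compose2[OF c2])
      using c3 fS zS by (simp add: image_image[symmetric])
    have eq: "\<forall>y\<in>S. z' (f (z y)) = f y"
    proof
      fix y assume y: "y \<in> S"
      have "f y \<in> S" using y fS by blast
      then show "z' (f (z y)) = f y" using assms(5) y zz' S_def by auto
    qed
    show ?thesis
      by (rule continuous_transform_within[OF c4 zero_less_one x]) (use eq in auto)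
  qed
  have Dz: "z x \<in> D" if "x \<in> D" for x
    using that key zS unfolding D_def by blast
  have D0: "0 \<notin> D" using assms(6) S_def D_def by auto
  have Dpos: "x \<in> {0<..<r}" if "x \<in> D" for x
    using that D0 unfolding D_def S_def by (cases "x = 0") auto
  have finD: "finite D" using assms(7) unfolding D_def S_def .
  have "D = {}"
  proof (rule ccontr)
    assume "D \<noteq> {}"
    then obtain x where x: "x \<in> D" by blast
    have inD: "(z ^^ n) x \<in> D" for n
      by (induction n) (auto simp: x Dz)
    have "strict_mono (\<lambda>n. (z ^^ n) x)"
    proof (rule strict_monoI_Suc)
      fix n
      show "(z ^^ n) x < (z ^^ Suc n) x"
        using assms(3) Dpos[OF inD[of n]] by simp
    qed
    then have "inj (\<lambda>n. (z ^^ n) x)" by (rule strict_mono_imp_inj_on)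
    then have "infinite (range (\<lambda>n. (z ^^ n) x))" by (rule range_inj_infinite)
    moreover have "range (\<lambda>n. (z ^^ n) x) \<subseteq> D" using inD by auto
    ultimately show False using finD finite_subset by blast
  qed
  then show ?thesis
    unfolding continuous_on_eq_continuous_within D_def S_def by auto
qed

end
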